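(* Consider the noisy urn process $(A_t,B_t)_{t\in\mathbb{N}}$ described in the context with $\kappa=1$ almost surely (the leaky urn), started at $(A_1,B_1)=(1,0)$, and let $\tau:=\min\{t>1:|A_t|+|B_t|=1\}$ (the time to absorption of the leaky urn). Then $\mathbb{E}[\tau]=\infty$.
   Context: Noisy urn with a $\mathbb{Z}$-valued $\kappa$ (here $\kappa\equiv1$), $\kappa_t$ i.i.d. copies, $\mathrm{sgn}(x)=x/|x|$: a Markov chain on $\mathbb{Z}^2\setminus\{(0,0)\}$. If $A_tB_t\ne0$: from $(a,b)$ it moves to $(a,b+\mathrm{sgn}(a))$ with probability $|a|/(|a|+|b|)$ and to $(a-\mathrm{sgn}(b),b)$ with probability $|b|/(|a|+|b|)$. If $A_t\ne0,B_t=0$: $(A_{t+1},B_{t+1})=(\mathrm{sgn}(A_t)\max\{1,|A_t|-\kappa_t\},\mathrm{sgn}(A_t))$. If $A_t=0,B_t\ne0$: $(A_{t+1},B_{t+1})=(-\mathrm{sgn}(B_t),\mathrm{sgn}(B_t)\max\{1,|B_t|-\kappa_t\})$. *)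

theory Defs
  imports "HOL-Probability.Probability"
begin

text \<open>One step of the noisy urn with a given (here deterministic) value k of kappa_t.
  The randomness of the step in the case a b \<noteq> 0 is realised by a driving
  variable u, uniform on [0,1]: with probability |a|/(|a|+|b|) (namely u < |a|/(|a|+|b|))
  move to (a, b + sgn a), otherwise to (a - sgn b, b).\<close>
definition urn_step :: "int \<Rightarrow> int \<times> int \<Rightarrow> real \<Rightarrow> int \<times> int" where
  "urn_step k p u = (case p of (a, b) \<Rightarrow>
     if a \<noteq> 0 \<and> b \<noteq> 0 then
       (if u < real_of_int \<bar>a\<bar> / real_of_int (\<bar>a\<bar> + \<bar>b\<bar>) then (a, b + sgn a) else (a - sgn b, b))
     else if a \<noteq> 0 \<and> b = 0 then (sgn a * max 1 (\<bar>a\<bar> - k), sgn a)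
     else if a = 0 \<and> b \<noteq> 0 then (- sgn b, sgn b * max 1 (\<bar>b\<bar> - k))
     else (0, 0))"

definition noise_space :: "(nat \<Rightarrow> real) measure" where
  "noise_space = PiM UNIV (\<lambda>_. uniform_measure lborel {0..1})"

text \<open>The value at t = 0 is an unused dummy.\<close>
primrec leaky_urn :: "(nat \<Rightarrow> real) \<Rightarrow> nat \<Rightarrow> int \<times> int" where
  "leaky_urn \<omega> 0 = (1, 0)"
| "leaky_urn \<omega> (Suc n) = (if n = 0 then (1, 0) else urn_step 1 (leaky_urn \<omega> n) (\<omega> n))"

definition absorption_time :: "(nat \<Rightarrow> real) \<Rightarrow> ennreal" where
  "absorption_time \<omega> =
     (if \<exists>t>1. \<bar>fst (leaky_urn \<omega> t)\<bar> + \<bar>snd (leaky_urn \<omega> t)\<bar> = 1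
      then of_nat (LEAST t. t > 1 \<and> \<bar>fst (leaky_urn \<omega> t)\<bar> + \<bar>snd (leaky_urn \<omega> t)\<bar> = 1)
      else \<infinity>)"

end

theory Submission imports Defs begin


abbreviation UM :: "real measure" where "UM \<equiv> uniform_measure lborel {0..1}"

lemma prob_UM: "prob_space UM"
  by (rule prob_space_uniform_measure) auto

lemma seq_UM: "sequence_space UM"
proof -
  interpret prob_space UM by (rule prob_UM)
  show ?thesis by unfold_locales
qed

lemma decomp:
  assumes [measurable]: "f \<in> borel_measurable noise_space"
  shows "(\<integral>\<^sup>+\<omega>. f \<omega> \<partial>noise_space) = (\<integral>\<^sup>+x. (\<integral>\<^sup>+\<omega>. f (case_nat x \<omega>) \<partial>noise_space) \<partial>UM)"
proof -
  interpret S: sequence_space UM by (rule seq_UM)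
  interpret P: pair_sigma_finite UM "\<Pi>\<^sub>M i::nat\<in>UNIV. UM" ..
  have m[measurable]: "f \<in> borel_measurable S.S" using assms by (simp add: noise_space_def)
  have "(\<integral>\<^sup>+\<omega>. f \<omega> \<partial>noise_space) = (\<integral>\<^sup>+X. f ((\<lambda>(s, \<omega>). case_nat s \<omega>) X) \<partial>(UM \<Otimes>\<^sub>M S.S))"
    using assms unfolding noise_space_def
    by (subst S.PiM_iter[symmetric]) (simp add: nn_integral_distr)
  also have "\<dots> = (\<integral>\<^sup>+x. \<integral>\<^sup>+X. f ((\<lambda>(s, \<omega>). case_nat s \<omega>) (x, X)) \<partial>S.S \<partial>UM)"
  proof (subst S.nn_integral_fst)
    have c: "(\<lambda>X. case_nat (fst X) (snd X)) \<in> measurable (UM \<Otimes>\<^sub>M S.S) S.S" by measurable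
    show "(\<lambda>a. f ((\<lambda>(s, \<omega>). case_nat s \<omega>) a)) \<in> borel_measurable (UM \<Otimes>\<^sub>M S.S)"
      using measurable_compose[OF c m] by (simp add: split_beta')
  qed simp
  finally show ?thesis by (simp add: noise_space_def)
qed

lemma step_if: "\<exists>c x y. \<forall>u. urn_step 1 s u = (if u < c then x else y)"
proof (cases s)
  case (Pair a b)
  show ?thesis
  proof (cases "a \<noteq> 0 \<and> b \<noteq> 0")
    case True
    then show ?thesis unfolding Pair urn_step_def
      by (intro exI[of _ "real_of_int \<bar>a\<bar> / real_of_int (\<bar>a\<bar> + \<bar>b\<bar>)"] exI[of _ "(a, b + sgn a)"] exI[of _ "(a - sgn b, b)"]) simp
  next
    case False
    then show ?thesis unfolding Pair urn_step_def
      by (intro exI[of _ 0] exI[of _ "urn_step 1 (a,b) 0"]) (auto simp: urn_step_def)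
  qed
qed

lemma meas_step[measurable]: "(\<lambda>u. urn_step 1 s u) \<in> measurable borel (count_space UNIV)"
proof -
  obtain c x y where h: "\<And>u. urn_step 1 s u = (if u < c then x else y)" using step_if by blast
  have "(\<lambda>u::real. if u < c then x else y) \<in> measurable borel (count_space UNIV)"
    by measurable
  then show ?thesis unfolding h .
qed

lemma meas_shift[measurable]: "(\<lambda>\<omega>::nat\<Rightarrow>real. \<lambda>k. \<omega> (Suc k)) \<in> measurable noise_space noise_space"
  unfolding noise_space_def by (rule measurable_PiM_single') (auto simp: space_PiM)

lemma meas_0[measurable]: "(\<lambda>\<omega>::nat\<Rightarrow>real. \<omega> n) \<in> measurable noise_space borel"
  unfolding noise_space_def by measurable

definition sz :: "int \<times> int \<Rightarrow> int" where "sz p = \<bar>fst p\<bar> + \<bar>snd p\<bar>"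

fun W :: "int \<times> int \<Rightarrow> (nat \<Rightarrow> real) \<Rightarrow> nat \<Rightarrow> int \<times> int" where
  "W s \<omega> 0 = s"
| "W s \<omega> (Suc n) = W (urn_step 1 s (\<omega> 0)) (\<lambda>k. \<omega> (Suc k)) n"

fun F1 :: "int \<times> int \<Rightarrow> (nat \<Rightarrow> real) \<Rightarrow> nat \<Rightarrow> ennreal" where
  "F1 s \<omega> 0 = (if sz s = 1 then 0 else 1)"
| "F1 s \<omega> (Suc n) = (if sz s = 1 then 0 else F1 (urn_step 1 s (\<omega> 0)) (\<lambda>k. \<omega> (Suc k)) n)"

definition Ek :: "(int \<times> int \<Rightarrow> real) \<Rightarrow> int \<times> int \<Rightarrow> real" where
  "Ek g s = (case s of (a, b) \<Rightarrow> if a \<noteq> 0 \<and> b \<noteq> 0 then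
     (\<bar>a\<bar> / (\<bar>a\<bar> + \<bar>b\<bar>)) * g (a, b + sgn a) + (\<bar>b\<bar> / (\<bar>a\<bar> + \<bar>b\<bar>)) * g (a - sgn b, b)
     else g (urn_step 1 s 0))"

fun J :: "(int \<times> int \<Rightarrow> real) \<Rightarrow> nat \<Rightarrow> int \<times> int \<Rightarrow> real" where
  "J \<phi> 0 s = (if sz s = 1 then 0 else \<phi> s)"
| "J \<phi> (Suc n) s = (if sz s = 1 then 0 else Ek (J \<phi> n) s)"

lemma meas_F1[measurable]: "(\<lambda>\<omega>. F1 s \<omega> n) \<in> borel_measurable noise_space"
proof (induction n arbitrary: s)
  case 0
  then show ?case by simp
next
  case (Suc n)
  have "(\<lambda>\<omega>. F1 (urn_step 1 s (\<omega> 0)) (\<lambda>k. \<omega> (Suc k)) n) \<in> borel_measurable noise_space"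
  proof (rule measurable_compose_countable'[where g="\<lambda>\<omega>. urn_step 1 s (\<omega> 0)" and I=UNIV])
    fix i
    show "(\<lambda>\<omega>. F1 i (\<lambda>k. \<omega> (Suc k)) n) \<in> borel_measurable noise_space"
      using measurable_compose[OF meas_shift Suc.IH[of i]] by simp
  next
    show "(\<lambda>\<omega>. urn_step 1 s (\<omega> 0)) \<in> measurable noise_space (count_space UNIV)"
      using measurable_compose[OF meas_0 meas_step] by simp
  qed simp
  then show ?case by simp
qed

lemma Ek_nonneg: "(\<And>t. g t \<ge> 0) \<Longrightarrow> Ek g s \<ge> 0"
  by (auto simp: Ek_def split: prod.splits)

lemma J_nonneg: "(\<And>t. \<phi> t \<ge> 0) \<Longrightarrow> J \<phi> n s \<ge> 0"
  by (induction n arbitrary: s) (auto intro!: Ek_nonneg)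

lemma ediv1: "(x::ennreal) / 1 = x" unfolding divide_ennreal_def by simp

lemma prob_noise: "prob_space noise_space"
  unfolding noise_space_def by (rule prob_space_PiM) (rule prob_UM)


lemma kernel:
  assumes g: "\<And>t. g t \<ge> 0"
  shows "(\<integral>\<^sup>+u. ennreal (g (urn_step 1 s u)) \<partial>UM) = ennreal (Ek g s)"
proof (cases s)
  case (Pair a b)
  show ?thesis
  proof (cases "a \<noteq> 0 \<and> b \<noteq> 0")
    case True
    define c where "c = real_of_int \<bar>a\<bar> / real_of_int (\<bar>a\<bar> + \<bar>b\<bar>)"
    have c01: "0 \<le> c" "c \<le> 1" using True by (auto simp: c_def)
    have c1: "real_of_int \<bar>b\<bar> / real_of_int (\<bar>a\<bar> + \<bar>b\<bar>) = 1 - c"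
    proof -
      have d: "real_of_int (\<bar>a\<bar> + \<bar>b\<bar>) \<noteq> 0" using True by linarith
      have "real_of_int \<bar>b\<bar> / real_of_int (\<bar>a\<bar> + \<bar>b\<bar>) = (real_of_int (\<bar>a\<bar> + \<bar>b\<bar>) - real_of_int \<bar>a\<bar>) / real_of_int (\<bar>a\<bar> + \<bar>b\<bar>)"
        by simp
      also have "\<dots> = 1 - c" unfolding c_def diff_divide_distrib using d by simp
      finally show ?thesis .
    qed
    have eq: "\<And>u. ennreal (g (urn_step 1 s u)) = 
       ennreal (g (a, b + sgn a)) * indicator {..<c} u + ennreal (g (a - sgn b, b)) * indicator {c..} u"
      using True by (auto simp: Pair urn_step_def c_def split: split_indicator)
    have m1: "emeasure UM {..<c} = ennreal c"
    proof -
      have "emeasure UM {..<c} = emeasure lborel ({0..1} \<inter> {..<c}) / emeasure lborel {0..1::real}"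
        by (rule emeasure_uniform_measure) auto
      also have "{0..1} \<inter> {..<c} = {0..<c}" using c01 by auto
      finally show ?thesis using c01 by (simp add: ediv1)
    qed
    have m2: "emeasure UM {c..} = ennreal (1 - c)"
    proof -
      have "emeasure UM {c..} = emeasure lborel ({0..1} \<inter> {c..}) / emeasure lborel {0..1::real}"
        by (rule emeasure_uniform_measure) auto
      also have "{0..1} \<inter> {c..} = {c..1}" using c01 by auto
      finally show ?thesis using c01 by (simp add: ediv1)
    qed
    have "(\<integral>\<^sup>+u. ennreal (g (urn_step 1 s u)) \<partial>UM) =
        (\<integral>\<^sup>+u. ennreal (g (a, b + sgn a)) * indicator {..<c} u \<partial>UM) + (\<integral>\<^sup>+u. ennreal (g (a - sgn b, b)) * indicator {c..} u \<partial>UM)"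
      unfolding eq
      by (rule nn_integral_add) (intro borel_measurable_times_ennreal borel_measurable_const borel_measurable_indicator; simp)+
    also have "\<dots> = ennreal (g (a, b + sgn a)) * ennreal c + ennreal (g (a - sgn b, b)) * ennreal (1 - c)"
      by (subst nn_integral_cmult_indicator, simp)+ (simp add: m1 m2)
    also have "\<dots> = ennreal (c * g (a, b + sgn a) + (1 - c) * g (a - sgn b, b))"
      using c01 g by (simp add: ennreal_mult' ennreal_plus mult.commute)
    also have "\<dots> = ennreal (Ek g s)"
      using True c1 by (simp add: Ek_def Pair c_def)
    finally show ?thesis .
  next
    case False
    have h: "\<And>u. urn_step 1 s u = urn_step 1 s 0" using False by (auto simp: Pair urn_step_def)
    have "(\<integral>\<^sup>+u. ennreal (g (urn_step 1 s u)) \<partial>UM) = (\<integral>\<^sup>+u. ennreal (g (urn_step 1 s 0)) \<partial>UM)"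
      by (intro nn_integral_cong) (metis h)
    also have "\<dots> = ennreal (g (urn_step 1 s 0))"
      using prob_space.emeasure_space_1[OF prob_UM] by simp
    finally show ?thesis using False by (auto simp: Ek_def Pair)
  qed
qed




lemma int_F1: "(\<integral>\<^sup>+\<omega>. F1 s \<omega> n \<partial>noise_space) = ennreal (J (\<lambda>_. 1) n s)"
proof (induction n arbitrary: s)
  case 0
  have "(\<integral>\<^sup>+\<omega>. F1 s \<omega> 0 \<partial>noise_space) = (if sz s = 1 then 0 else 1)"
    using prob_space.emeasure_space_1[OF prob_noise] by simp
  then show ?case by simp
next
  case (Suc n)
  have "(\<integral>\<^sup>+\<omega>. F1 s \<omega> (Suc n) \<partial>noise_space) = (\<integral>\<^sup>+x. (\<integral>\<^sup>+\<omega>. F1 s (case_nat x \<omega>) (Suc n) \<partial>noise_space) \<partial>UM)"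
    by (rule decomp) measurable
  also have "\<dots> = (\<integral>\<^sup>+x. (if sz s = 1 then 0 else ennreal (J (\<lambda>_. 1) n (urn_step 1 s x))) \<partial>UM)"
  proof -
    have e: "\<And>x \<omega>. F1 s (case_nat x \<omega>) (Suc n) = (if sz s = 1 then 0 else F1 (urn_step 1 s x) \<omega> n)"
      by simp
    show ?thesis unfolding e by (cases "sz s = 1") (simp_all add: Suc.IH)
  qed
  also have "\<dots> = ennreal (J (\<lambda>_. 1) (Suc n) s)"
    by (simp add: kernel J_nonneg)
  finally show ?case .
qed




definition G :: "int \<times> int \<Rightarrow> real" where
  "G s = (case s of (a, b) \<Rightarrow> real_of_int (a^2 + b^2 +
     (if (0 < a \<and> 0 < b) \<or> (a < 0 \<and> b < 0) then \<bar>a\<bar> - \<bar>b\<bar>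
      else if a \<noteq> 0 \<and> b \<noteq> 0 then \<bar>b\<bar> - \<bar>a\<bar> else - \<bar>a\<bar> - \<bar>b\<bar>)))"

lemma sz1_cases: "sz (a, b) = 1 \<Longrightarrow> (a = 0 \<and> (b = 1 \<or> b = -1)) \<or> (b = 0 \<and> (a = 1 \<or> a = -1))"
  unfolding sz_def by auto

lemma G_sz1: "sz s = 1 \<Longrightarrow> G s = 0"
  by (cases s) (use sz1_cases in \<open>fastforce simp: G_def\<close>)

lemma G_11: "G (1, 1) = 2"
  by (simp add: G_def)

lemma Gpp: "0 \<le> a \<Longrightarrow> 0 < b \<Longrightarrow> G (a, b) = real_of_int (a^2 + b^2 + a - b)"
  by (cases "a = 0") (auto simp: G_def)
lemma Gnn: "a \<le> 0 \<Longrightarrow> b < 0 \<Longrightarrow> G (a, b) = real_of_int (a^2 + b^2 - a + b)"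
  by (cases "a = 0") (auto simp: G_def)
lemma Gpn: "0 < a \<Longrightarrow> b \<le> 0 \<Longrightarrow> G (a, b) = real_of_int (a^2 + b^2 - a - b)"
  by (cases "b = 0") (auto simp: G_def)
lemma Gnp: "a < 0 \<Longrightarrow> 0 \<le> b \<Longrightarrow> G (a, b) = real_of_int (a^2 + b^2 + a + b)"
  by (cases "b = 0") (auto simp: G_def)

lemma G_q13:
  assumes "(0 < a \<and> 0 < b) \<or> (a < 0 \<and> b < 0)"
  shows "G (a, b + sgn a) = G (a, b) + 2 * real_of_int \<bar>b\<bar>" "G (a - sgn b, b) = G (a, b) - 2 * real_of_int \<bar>a\<bar>"
  using assms
  by (auto simp: Gpp Gnn power2_eq_square algebra_simps)

lemma G_q24:
  assumes "(0 < a \<and> b < 0) \<or> (a < 0 \<and> 0 < b)"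
  shows "G (a, b + sgn a) = G (a, b) - 2 * real_of_int \<bar>b\<bar>" "G (a - sgn b, b) = G (a, b) + 2 * real_of_int \<bar>a\<bar>"
  using assms
  by (auto simp: Gpn Gnp power2_eq_square algebra_simps)

lemma G_axis:
  assumes "\<not> (a \<noteq> 0 \<and> b \<noteq> 0)" "sz (a, b) \<noteq> 1"
  shows "G (urn_step 1 (a, b) 0) = G (a, b)"
proof -
  have "a = 0 \<or> b = 0" using assms(1) by auto
  moreover have "\<not> (\<bar>a\<bar> + \<bar>b\<bar> = 1)" using assms(2) by (simp add: sz_def)
  ultimately consider "a = 0" "b = 0" | "b = 0" "a \<ge> 2" | "b = 0" "a \<le> -2" | "a = 0" "b \<ge> 2" | "a = 0" "b \<le> -2"
    by linarith
  then show ?thesis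
  proof cases
    case 1 then show ?thesis by (simp add: urn_step_def)
  next
    case 2
    then have "urn_step 1 (a, b) 0 = (a - 1, 1)" by (simp add: urn_step_def max_def)
    then show ?thesis using 2 by (simp add: Gpp Gpn power2_eq_square algebra_simps)
  next
    case 3
    then have "urn_step 1 (a, b) 0 = (a + 1, -1)" by (simp add: urn_step_def max_def)
    then show ?thesis using 3 by (simp add: Gnn Gnp power2_eq_square algebra_simps)
  next
    case 4
    then have "urn_step 1 (a, b) 0 = (-1, b - 1)" by (simp add: urn_step_def max_def)
    then show ?thesis using 4 by (simp add: Gnp Gpp power2_eq_square algebra_simps)
  next
    case 5
    then have "urn_step 1 (a, b) 0 = (1, b + 1)" by (simp add: urn_step_def max_def)
    then show ?thesis using 5 by (simp add: Gpn Gnn power2_eq_square algebra_simps)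
  qed
qed

lemma G_prod_le:
  assumes "a \<noteq> 0" "b \<noteq> 0"
  shows "real_of_int \<bar>a\<bar> * real_of_int \<bar>b\<bar> \<le> G (a, b)"
proof -
  define x where "x = \<bar>a\<bar>"
  define y where "y = \<bar>b\<bar>"
  have x: "x \<ge> 1" and y: "y \<ge> 1" using assms by (auto simp: x_def y_def)
  have h1: "x * y \<le> x^2 + y^2 + (x - y)"
  proof -
    have "0 \<le> (x - y)^2 + y * (x - 1) + x" using x y by (intro add_nonneg_nonneg) auto
    then show ?thesis by (simp add: power2_eq_square algebra_simps)
  qed
  have h2: "x * y \<le> x^2 + y^2 + (y - x)"
  proof -
    have "0 \<le> (x - y)^2 + x * (y - 1) + y" using x y by (intro add_nonneg_nonneg) auto
    then show ?thesis by (simp add: power2_eq_square algebra_simps)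
  qed
  have ax: "a^2 = x^2" "b^2 = y^2" unfolding x_def y_def by simp_all
  consider "0 < a" "0 < b" | "a < 0" "b < 0" | "a < 0" "0 < b" | "0 < a" "b < 0" using assms by linarith
  then have "G (a, b) = real_of_int (x^2 + y^2 + (x - y)) \<or> G (a, b) = real_of_int (x^2 + y^2 + (y - x))"
  proof cases
    case 1 then show ?thesis using ax by (simp add: Gpp x_def y_def)
  next
    case 2 then show ?thesis using ax by (simp add: Gnn x_def y_def)
  next
    case 3 then show ?thesis using ax by (simp add: Gnp x_def y_def)
  next
    case 4 then show ?thesis using ax by (simp add: Gpn x_def y_def)
  qed
  then show ?thesis using h1 h2 unfolding x_def[symmetric] y_def[symmetric]
    by (metis of_int_le_iff of_int_mult)
qed

lemma comb:
  fixes x y A B C :: real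
  assumes "x > 0" "y > 0" "x * A + y * B = C * (x + y)"
  shows "x / (x + y) * A + y / (x + y) * B = C"
proof -
  have "x / (x + y) * A + y / (x + y) * B = (x * A + y * B) / (x + y)"
    by (simp add: add_divide_distrib)
  also have "\<dots> = C" using assms by simp
  finally show ?thesis .
qed

lemma pq_facts:
  fixes x y g :: real
  assumes "x > 0" "y > 0"
  shows "x / (x + y) * (g + 2 * y) + y / (x + y) * (g - 2 * x) = g"
    and "x / (x + y) * (g - 2 * y) + y / (x + y) * (g + 2 * x) = g"
    and "x / (x + y) * (g + 2 * y)^2 + y / (x + y) * (g - 2 * x)^2 = g^2 + 4 * (x * y)"
    and "x / (x + y) * (g - 2 * y)^2 + y / (x + y) * (g + 2 * x)^2 = g^2 + 4 * (x * y)"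
    and "x / (x + y) * g + y / (x + y) * g = g"
  by (rule comb[OF assms]; simp add: power2_eq_square algebra_simps)+

lemma Ek_interior: "a \<noteq> 0 \<Longrightarrow> b \<noteq> 0 \<Longrightarrow> Ek g (a, b) =
   real_of_int \<bar>a\<bar> / (real_of_int \<bar>a\<bar> + real_of_int \<bar>b\<bar>) * g (a, b + sgn a) +
   real_of_int \<bar>b\<bar> / (real_of_int \<bar>a\<bar> + real_of_int \<bar>b\<bar>) * g (a - sgn b, b)"
  by (simp add: Ek_def)

lemma Ek_axis: "\<not> (a \<noteq> 0 \<and> b \<noteq> 0) \<Longrightarrow> Ek g (a, b) = g (urn_step 1 (a, b) 0)"
  unfolding Ek_def by auto

lemma abs_le_sq: "\<bar>z::int\<bar> \<le> z^2"
proof (cases "z = 0")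
  case False
  then have "\<bar>z\<bar> * 1 \<le> \<bar>z\<bar> * \<bar>z\<bar>" by (intro mult_left_mono) auto
  then show ?thesis by (simp add: power2_eq_square abs_mult_self_eq)
qed simp

lemma G_nonneg: "G s \<ge> 0"
proof (cases s)
  case (Pair a b)
  have "0 \<le> a^2 + b^2 +
     (if (0 < a \<and> 0 < b) \<or> (a < 0 \<and> b < 0) then \<bar>a\<bar> - \<bar>b\<bar>
      else if a \<noteq> 0 \<and> b \<noteq> 0 then \<bar>b\<bar> - \<bar>a\<bar> else - \<bar>a\<bar> - \<bar>b\<bar>)"
    using abs_le_sq[of a] abs_le_sq[of b] by auto
  then show ?thesis unfolding G_def Pair by (simp only: case_prod_conv of_int_0_le_iff)
qed

lemma Ek_const: "Ek (\<lambda>_. c) s = c"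
proof (cases s)
  case (Pair a b)
  show ?thesis
  proof (cases "a \<noteq> 0 \<and> b \<noteq> 0")
    case True
    then have x: "real_of_int \<bar>a\<bar> > 0" and y: "real_of_int \<bar>b\<bar> > 0" by auto
    show ?thesis unfolding Pair Ek_interior[OF conjunct1[OF True] conjunct2[OF True]] by (rule pq_facts(5)[OF x y])
  qed (auto simp: Ek_def Pair)
qed

lemma Ek_lin: "Ek (\<lambda>t. \<alpha> * f t + \<beta> * g t) s = \<alpha> * Ek f s + \<beta> * Ek g s"
  by (cases s) (simp add: Ek_def algebra_simps)

lemma Ek_mono: 
  assumes "\<And>t. f t \<le> g t" shows "Ek f s \<le> Ek g s"
proof (cases s)
  case (Pair a b)
  show ?thesis
  proof (cases "a \<noteq> 0 \<and> b \<noteq> 0")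
    case True
    show ?thesis unfolding Pair Ek_interior[OF conjunct1[OF True] conjunct2[OF True]]
      by (intro add_mono mult_left_mono assms) auto
  qed (auto simp: Ek_def Pair assms)
qed

lemma Ek_G: "sz s \<noteq> 1 \<Longrightarrow> Ek G s = G s"
proof (cases s)
  case (Pair a b)
  assume sz: "sz s \<noteq> 1"
  show ?thesis
  proof (cases "a \<noteq> 0 \<and> b \<noteq> 0")
    case True
    then have x: "real_of_int \<bar>a\<bar> > 0" and y: "real_of_int \<bar>b\<bar> > 0" by auto
    consider "(0 < a \<and> 0 < b) \<or> (a < 0 \<and> b < 0)" | "(0 < a \<and> b < 0) \<or> (a < 0 \<and> 0 < b)"
      using True by linarith
    then show ?thesis
    proof cases
      case 1
      show ?thesis unfolding Pair Ek_interior[OF conjunct1[OF True] conjunct2[OF True]] G_q13[OF 1]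
        by (rule pq_facts(1)[OF x y])
    next
      case 2
      show ?thesis unfolding Pair Ek_interior[OF conjunct1[OF True] conjunct2[OF True]] G_q24[OF 2]
        by (rule pq_facts(2)[OF x y])
    qed
  next
    case False
    then show ?thesis unfolding Pair Ek_axis[OF False] using G_axis[OF False] sz Pair by simp
  qed
qed

lemma Ek_G2: "sz s \<noteq> 1 \<Longrightarrow> Ek (\<lambda>t. (G t)^2) s \<le> (G s)^2 + 4 * G s"
proof (cases s)
  case (Pair a b)
  assume sz: "sz s \<noteq> 1"
  show ?thesis
  proof (cases "a \<noteq> 0 \<and> b \<noteq> 0")
    case True
    then have x: "real_of_int \<bar>a\<bar> > 0" and y: "real_of_int \<bar>b\<bar> > 0" by auto
    have le: "real_of_int \<bar>a\<bar> * real_of_int \<bar>b\<bar> \<le> G (a, b)"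
      using G_prod_le True by blast
    consider "(0 < a \<and> 0 < b) \<or> (a < 0 \<and> b < 0)" | "(0 < a \<and> b < 0) \<or> (a < 0 \<and> 0 < b)"
      using True by linarith
    then show ?thesis
    proof cases
      case 1
      have "Ek (\<lambda>t. (G t)^2) s = (G s)^2 + 4 * (real_of_int \<bar>a\<bar> * real_of_int \<bar>b\<bar>)"
        unfolding Pair Ek_interior[OF conjunct1[OF True] conjunct2[OF True]] G_q13[OF 1]
        by (rule pq_facts(3)[OF x y])
      then show ?thesis using le Pair by simp
    next
      case 2
      have "Ek (\<lambda>t. (G t)^2) s = (G s)^2 + 4 * (real_of_int \<bar>a\<bar> * real_of_int \<bar>b\<bar>)"
        unfolding Pair Ek_interior[OF conjunct1[OF True] conjunct2[OF True]] G_q24[OF 2]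
        by (rule pq_facts(4)[OF x y])
      then show ?thesis using le Pair by simp
    qed
  next
    case False
    have "G s \<ge> 0" by (rule G_nonneg)
    then show ?thesis unfolding Pair Ek_axis[OF False] using G_axis[OF False] sz Pair by simp
  qed
qed

lemma J_lin: "J (\<lambda>t. \<alpha> * f t + \<beta> * g t) n s = \<alpha> * J f n s + \<beta> * J g n s"
proof (induction n arbitrary: s)
  case (Suc n)
  have e: "J (\<lambda>t. \<alpha> * f t + \<beta> * g t) n = (\<lambda>t. \<alpha> * J f n t + \<beta> * J g n t)"
    using Suc.IH by (intro ext) simp
  show ?case by (simp add: e Ek_lin)
qed simp

lemma J_mono: "(\<And>t. f t \<le> g t) \<Longrightarrow> J f n s \<le> J g n s"
proof (induction n arbitrary: s)
  case (Suc n)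
  then show ?case by (simp add: Ek_mono)
qed simp

lemma J_G: "J G n s = G s"
proof (induction n arbitrary: s)
  case 0
  then show ?case using G_sz1 by simp
next
  case (Suc n)
  have e: "J G n = G" using Suc.IH by (intro ext)
  show ?case using G_sz1 Ek_G by (simp add: e)
qed

lemma J_G2: "J (\<lambda>t. (G t)^2) n s \<le> (G s)^2 + 4 * real n * G s"
proof (induction n arbitrary: s)
  case 0
  then show ?case using G_sz1 by simp
next
  case (Suc n)
  show ?case
  proof (cases "sz s = 1")
    case True
    then show ?thesis using G_sz1[OF True] by simp
  next
    case False
    have "J (\<lambda>t. (G t)^2) (Suc n) s = Ek (J (\<lambda>t. (G t)^2) n) s" using False by simp
    also have "\<dots> \<le> Ek (\<lambda>t. 1 * (G t)^2 + (4 * real n) * G t) s"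
      by (rule Ek_mono) (use Suc.IH in simp)
    also have "\<dots> = Ek (\<lambda>t. (G t)^2) s + (4 * real n) * Ek G s"
      using Ek_lin[of 1 "\<lambda>t. (G t)^2" "4 * real n" G s] by simp
    also have "\<dots> \<le> (G s)^2 + 4 * G s + (4 * real n) * G s"
      using Ek_G2[OF False] Ek_G[OF False] by simp
    finally show ?thesis by (simp add: algebra_simps)
  qed
qed

lemma J1_lower: "J (\<lambda>_. 1) n (1, 1) \<ge> 1 / (1 + 2 * real n)"
proof -
  define c :: real where "c = 2 + 4 * real n"
  have c: "c > 0" by (simp add: c_def)
  have pw: "G t \<le> (1 / (2 * c)) * (G t)^2 + (c / 2) * 1" for t
  proof -
    have "0 \<le> (G t - c)^2" by simp
    then have "2 * c * G t \<le> (G t)^2 + c^2" by (simp add: power2_eq_square algebra_simps)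
    then have "G t \<le> ((G t)^2 + c^2) / (2 * c)" using c by (simp add: field_simps)
    also have "\<dots> = (1 / (2 * c)) * (G t)^2 + (c / 2) * 1" using c by (simp add: field_simps power2_eq_square)
    finally show ?thesis .
  qed
  have "2 = J G n (1, 1)" using J_G G_11 by simp
  also have "\<dots> \<le> J (\<lambda>t. (1 / (2 * c)) * (G t)^2 + (c / 2) * 1) n (1, 1)"
    by (rule J_mono) (rule pw)
  also have "\<dots> = (1 / (2 * c)) * J (\<lambda>t. (G t)^2) n (1, 1) + (c / 2) * J (\<lambda>_. 1) n (1, 1)"
    by (rule J_lin)
  also have "\<dots> \<le> (1 / (2 * c)) * (4 + 8 * real n) + (c / 2) * J (\<lambda>_. 1) n (1, 1)"
    using J_G2[of n "(1,1)"] G_11 c by (intro add_right_mono mult_left_mono) simp_all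
  also have "(1 / (2 * c)) * (4 + 8 * real n) = 1" using c by (simp add: c_def field_simps)
  finally have "1 \<le> (c / 2) * J (\<lambda>_. 1) n (1, 1)" by simp
  then have "1 / (c / 2) \<le> J (\<lambda>_. 1) n (1, 1)" using c by (simp add: field_simps)
  moreover have "1 / (c / 2) = 1 / (1 + 2 * real n)" unfolding c_def by (simp add: field_simps)
  ultimately show ?thesis by simp
qed




lemma W_Suc': "W s \<omega> (Suc n) = urn_step 1 (W s \<omega> n) (\<omega> n)"
proof (induction n arbitrary: s \<omega>)
  case 0
  then show ?case by simp
next
  case (Suc n)
  have "W s \<omega> (Suc (Suc n)) = W (urn_step 1 s (\<omega> 0)) (\<lambda>k. \<omega> (Suc k)) (Suc n)"
    by (simp only: W.simps)
  also have "\<dots> = urn_step 1 (W (urn_step 1 s (\<omega> 0)) (\<lambda>k. \<omega> (Suc k)) n) (\<omega> (Suc n))"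
    by (rule Suc.IH)
  also have "\<dots> = urn_step 1 (W s \<omega> (Suc n)) (\<omega> (Suc n))"
    by (simp only: W.simps)
  finally show ?case .
qed

lemma leaky_W: "leaky_urn \<omega> (Suc (Suc k)) = W (1, 1) (\<lambda>j. \<omega> (Suc (Suc j))) k"
proof (induction k)
  case 0
  then show ?case by (simp add: urn_step_def)
next
  case (Suc k)
  have "leaky_urn \<omega> (Suc (Suc (Suc k))) = urn_step 1 (leaky_urn \<omega> (Suc (Suc k))) (\<omega> (Suc (Suc k)))"
    by simp
  also have "\<dots> = W (1, 1) (\<lambda>j. \<omega> (Suc (Suc j))) (Suc k)"
    unfolding Suc W_Suc' by simp
  finally show ?case .
qed

lemma F1_alive: "F1 s \<omega> n = (if \<forall>k\<le>n. sz (W s \<omega> k) \<noteq> 1 then 1 else 0)"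
proof (induction n arbitrary: s \<omega>)
  case 0
  then show ?case by simp
next
  case (Suc n)
  have "(\<forall>k\<le>Suc n. sz (W s \<omega> k) \<noteq> 1) \<longleftrightarrow>
     sz s \<noteq> 1 \<and> (\<forall>k\<le>n. sz (W (urn_step 1 s (\<omega> 0)) (\<lambda>k. \<omega> (Suc k)) k) \<noteq> 1)"
    (is "?L \<longleftrightarrow> ?R")
  proof
    assume L: ?L
    show ?R
    proof
      show "sz s \<noteq> 1" using L[rule_format, of 0] by simp
      show "\<forall>k\<le>n. sz (W (urn_step 1 s (\<omega> 0)) (\<lambda>k. \<omega> (Suc k)) k) \<noteq> 1"
        using L by (metis Suc_le_mono W.simps(2))
    qed
  next
    assume R: ?R
    show ?L
    proof (intro allI impI)
      fix k assume "k \<le> Suc n"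
      then show "sz (W s \<omega> k) \<noteq> 1" using R by (cases k) auto
    qed
  qed
  then show ?case by (simp add: Suc.IH)
qed

lemma pointwise:
  "(\<Sum>n<N. F1 (1, 1) (\<lambda>j. \<omega> (Suc (Suc j))) n) \<le> absorption_time \<omega>"
proof (cases "\<exists>t>1. \<bar>fst (leaky_urn \<omega> t)\<bar> + \<bar>snd (leaky_urn \<omega> t)\<bar> = 1")
  case False
  then show ?thesis unfolding absorption_time_def by auto
next
  case True
  define \<tau> where "\<tau> = (LEAST t. t > 1 \<and> \<bar>fst (leaky_urn \<omega> t)\<bar> + \<bar>snd (leaky_urn \<omega> t)\<bar> = 1)"
  have \<tau>: "\<tau> > 1" "\<bar>fst (leaky_urn \<omega> \<tau>)\<bar> + \<bar>snd (leaky_urn \<omega> \<tau>)\<bar> = 1"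
    using LeastI_ex[OF True] unfolding \<tau>_def by auto
  have abs_eq: "absorption_time \<omega> = of_nat \<tau>"
    using True by (simp add: absorption_time_def \<tau>_def)
  have sub: "{n. n < N \<and> F1 (1, 1) (\<lambda>j. \<omega> (Suc (Suc j))) n = 1} \<subseteq> {..<\<tau>}"
  proof
    fix n assume "n \<in> {n. n < N \<and> F1 (1, 1) (\<lambda>j. \<omega> (Suc (Suc j))) n = 1}"
    then have al: "\<forall>k\<le>n. sz (W (1, 1) (\<lambda>j. \<omega> (Suc (Suc j))) k) \<noteq> 1"
      by (simp add: F1_alive split: if_splits)
    show "n \<in> {..<\<tau>}"
    proof (rule ccontr)
      assume "n \<notin> {..<\<tau>}"
      then have "\<tau> - 2 \<le> n" by simp
      with al have "sz (W (1, 1) (\<lambda>j. \<omega> (Suc (Suc j))) (\<tau> - 2)) \<noteq> 1" by blast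
      moreover have "Suc (Suc (\<tau> - 2)) = \<tau>" using \<tau>(1) by simp
      ultimately have "sz (leaky_urn \<omega> \<tau>) \<noteq> 1" using leaky_W[of \<omega> "\<tau> - 2"] by simp
      then show False using \<tau>(2) by (simp add: sz_def)
    qed
  qed
  have "(\<Sum>n<N. F1 (1, 1) (\<lambda>j. \<omega> (Suc (Suc j))) n) = (\<Sum>n\<in>{n. n < N \<and> F1 (1, 1) (\<lambda>j. \<omega> (Suc (Suc j))) n = 1}. 1)"
  proof -
    have "(\<Sum>n<N. F1 (1, 1) (\<lambda>j. \<omega> (Suc (Suc j))) n) =
       (\<Sum>n<N. if F1 (1, 1) (\<lambda>j. \<omega> (Suc (Suc j))) n = 1 then 1 else 0)"
      by (intro sum.cong refl) (simp add: F1_alive)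
    also have "\<dots> = (\<Sum>n\<in>{n. n < N \<and> F1 (1, 1) (\<lambda>j. \<omega> (Suc (Suc j))) n = 1}. 1)"
      by (simp add: sum.If_cases lessThan_def Collect_conj_eq Int_commute)
    finally show ?thesis .
  qed
  also have "\<dots> = of_nat (card {n. n < N \<and> F1 (1, 1) (\<lambda>j. \<omega> (Suc (Suc j))) n = 1})" by simp
  also have "\<dots> \<le> of_nat (card {..<\<tau>})" using sub by (intro of_nat_mono card_mono) auto
  also have "\<dots> = absorption_time \<omega>" by (simp add: abs_eq)
  finally show ?thesis .
qed

lemma shift_inv:
  assumes [measurable]: "f \<in> borel_measurable noise_space"
  shows "(\<integral>\<^sup>+\<omega>. f (\<lambda>j. \<omega> (Suc j)) \<partial>noise_space) = (\<integral>\<^sup>+\<omega>. f \<omega> \<partial>noise_space)"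
proof -
  have m: "(\<lambda>\<omega>. f (\<lambda>j. \<omega> (Suc j))) \<in> borel_measurable noise_space"
    using measurable_compose[OF meas_shift assms] by simp
  have "(\<integral>\<^sup>+\<omega>. f (\<lambda>j. \<omega> (Suc j)) \<partial>noise_space) = (\<integral>\<^sup>+x. (\<integral>\<^sup>+\<omega>. f (\<lambda>j. case_nat x \<omega> (Suc j)) \<partial>noise_space) \<partial>UM)"
    by (rule decomp[OF m])
  also have "\<dots> = (\<integral>\<^sup>+x. (\<integral>\<^sup>+\<omega>. f \<omega> \<partial>noise_space) \<partial>UM)" by simp
  also have "\<dots> = (\<integral>\<^sup>+\<omega>. f \<omega> \<partial>noise_space)"
    using prob_space.emeasure_space_1[OF prob_UM] by simp
  finally show ?thesis .
qed

lemma int_F1_shift2: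
  "(\<integral>\<^sup>+\<omega>. F1 (1, 1) (\<lambda>j. \<omega> (Suc (Suc j))) n \<partial>noise_space) = ennreal (J (\<lambda>_. 1) n (1, 1))"
proof -
  have m1: "(\<lambda>\<omega>. F1 (1, 1) (\<lambda>j. \<omega> (Suc j)) n) \<in> borel_measurable noise_space"
    using measurable_compose[OF meas_shift meas_F1] by simp
  have "(\<integral>\<^sup>+\<omega>. F1 (1, 1) (\<lambda>j. \<omega> (Suc (Suc j))) n \<partial>noise_space) =
        (\<integral>\<^sup>+\<omega>. F1 (1, 1) (\<lambda>j. \<omega> (Suc j)) n \<partial>noise_space)"
    using shift_inv[OF m1] by simp
  also have "\<dots> = (\<integral>\<^sup>+\<omega>. F1 (1, 1) \<omega> n \<partial>noise_space)"
    by (rule shift_inv) measurable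
  also have "\<dots> = ennreal (J (\<lambda>_. 1) n (1, 1))" by (rule int_F1)
  finally show ?thesis .
qed

lemma not_summable_odd: "\<not> summable (\<lambda>n. 1 / (1 + 2 * real n))"
proof
  assume s: "summable (\<lambda>n. 1 / (1 + 2 * real n))"
  then have "summable (\<lambda>n. 2 * (1 / (1 + 2 * real n)))" by (rule summable_mult)
  then have "summable (\<lambda>n. inverse (real (Suc n)))"
    by (rule summable_comparison_test') (auto simp: field_simps)
  then have "summable (\<lambda>n. inverse (real n))" by (subst summable_Suc_iff[symmetric])
  then show False using not_summable_harmonic by blast
qed

theorem corollary3p8:
  shows "(\<integral>\<^sup>+ \<omega>. absorption_time \<omega> \<partial>noise_space) = \<infinity>"
proof (rule ccontr)
  assume ne: "(\<integral>\<^sup>+ \<omega>. absorption_time \<omega> \<partial>noise_space) \<noteq> \<infinity>"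
  define c where "c = (\<integral>\<^sup>+ \<omega>. absorption_time \<omega> \<partial>noise_space)"
  have bound: "ennreal (\<Sum>n<N. 1 / (1 + 2 * real n)) \<le> c" for N
  proof -
    have "ennreal (\<Sum>n<N. 1 / (1 + 2 * real n)) = (\<Sum>n<N. ennreal (1 / (1 + 2 * real n)))"
      by (rule sum_ennreal[symmetric]) simp
    also have "\<dots> \<le> (\<Sum>n<N. ennreal (J (\<lambda>_. 1) n (1, 1)))"
      by (intro sum_mono ennreal_leI J1_lower)
    also have "\<dots> = (\<Sum>n<N. (\<integral>\<^sup>+\<omega>. F1 (1, 1) (\<lambda>j. \<omega> (Suc (Suc j))) n \<partial>noise_space))"
      by (simp add: int_F1_shift2)
    also have "\<dots> = (\<integral>\<^sup>+\<omega>. (\<Sum>n<N. F1 (1, 1) (\<lambda>j. \<omega> (Suc (Suc j))) n) \<partial>noise_space)"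
    proof (rule nn_integral_sum[symmetric])
      fix n
      show "(\<lambda>\<omega>. F1 (1, 1) (\<lambda>j. \<omega> (Suc (Suc j))) n) \<in> borel_measurable noise_space"
        using measurable_compose[OF meas_shift measurable_compose[OF meas_shift meas_F1]] by simp
    qed
    also have "\<dots> \<le> c" unfolding c_def by (intro nn_integral_mono pointwise)
    finally show ?thesis .
  qed
  have "summable (\<lambda>n. 1 / (1 + 2 * real n))"
  proof (rule summableI_nonneg_bounded)
    fix N
    show "(\<Sum>n<N. 1 / (1 + 2 * real n)) \<le> enn2real c"
    proof -
      have ct: "c < top" using ne unfolding c_def by (simp add: top.not_eq_extremum)
      have "ennreal (\<Sum>n<N. 1 / (1 + 2 * real n)) \<le> ennreal (enn2real c)"
        using bound[of N] ennreal_enn2real[OF ct] by simp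
      then show ?thesis by (subst (asm) ennreal_le_iff) simp_all
    qed
  qed simp
  then show False using not_summable_odd by blast
qed


end
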